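(* Let $K\ge1$, $\eta_1,\eta_2\in(0,1]$, $P,\sigma_b^2,\sigma_D^2>0$, and for $k=1,\dots,K$ let $h_k,g_k\in\mathbb{C}\setminus\{0\}$ and $v_k\ge -\eta_1\eta_2P|h_k|^2$. Put $a_k=P|h_k|^2+\max\{0,v_k/\eta_1\}+\min\{0,v_k/(\eta_1\eta_2)\}+\sigma_b^2$ and $U_k=(1+\min\{0,v_k/(\eta_1\eta_2P|h_k|^2)\})P|h_k|^2+\sigma_b^2$. Consider problem (P2): $$\max_{x_1,\dots,x_K}\ J(x_1,\dots,x_K)=\frac{\Big(\sum_{k=1}^K\sqrt{\eta_1|g_k|^2(a_k-x_k)\big(1-\frac{\sigma_b^2}{x_k}\big)}\Big)^2}{\sum_{k=1}^K\eta_1|g_k|^2(a_k-x_k)\frac{\sigma_b^2}{x_k}+\sigma_D^2}\quad\text{s.t. } \sigma_b^2\le x_k\le U_k\ \forall k.$$ Consider the cyclic coordinate-ascent procedure (Algorithm 2): starting from a feasible point, repeatedly cycle through $j=1,\dots,K$, each time replacing $x_j$ by a maximizer over $[\sigma_b^2,U_j]$ of $J$ as a function of $x_j$ with the other coordinates fixed (computed by the Dinkelbach iteration), and stop when the increase of $J$ falls below a threshold $\Delta_2$ (or after a maximum number of iterations). Then this procedure converges to the optimal solution of (P2).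
   Context: Problem (P2) is the end-to-end SNR maximization over the information power-splitting ratios $\lambda_{k,I}$ (via $x_k=\lambda_{k,I}P|h_k|^2+\sigma_b^2$) in a wireless-powered amplify-and-forward distributed-beamforming relay network with $K$ relays, for a fixed battery energy-level variation $v_k$ at each relay; $\eta_1$ is the energy conversion efficiency, $\eta_2$ the battery storage efficiency, $\sigma_b^2$ the relay noise variance, $\sigma_D^2$ the destination noise variance. *)

theory Defs
  imports Complex_Main
begin

text \<open>Relays are indexed by k < K; per-relay data are functions nat => _.
  eta1, eta2: efficiencies; P: source power; sb = sigma_b^2; sD = sigma_D^2;
  h, g: channel coefficients; v: battery energy-level variation.\<close>

definition a_coef :: "real \<Rightarrow> real \<Rightarrow> real \<Rightarrow> real \<Rightarrow> complex \<Rightarrow> real \<Rightarrow> real" where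
  "a_coef eta1 eta2 P sb hk vk =
     P * (cmod hk)^2 + max 0 (vk / eta1) + min 0 (vk / (eta1 * eta2)) + sb"

definition U_coef :: "real \<Rightarrow> real \<Rightarrow> real \<Rightarrow> real \<Rightarrow> complex \<Rightarrow> real \<Rightarrow> real" where
  "U_coef eta1 eta2 P sb hk vk =
     (1 + min 0 (vk / (eta1 * eta2 * P * (cmod hk)^2))) * P * (cmod hk)^2 + sb"

definition J_obj :: "nat \<Rightarrow> real \<Rightarrow> real \<Rightarrow> real \<Rightarrow> real \<Rightarrow> real \<Rightarrow>
    (nat \<Rightarrow> complex) \<Rightarrow> (nat \<Rightarrow> complex) \<Rightarrow> (nat \<Rightarrow> real) \<Rightarrow> (nat \<Rightarrow> real) \<Rightarrow> real" where
  "J_obj K eta1 eta2 P sb sD h g v x =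
     (\<Sum>k<K. sqrt (eta1 * (cmod (g k))^2 * (a_coef eta1 eta2 P sb (h k) (v k) - x k)
                    * (1 - sb / x k)))^2
     / ((\<Sum>k<K. eta1 * (cmod (g k))^2 * (a_coef eta1 eta2 P sb (h k) (v k) - x k) * (sb / x k))
        + sD)"

definition feasible :: "nat \<Rightarrow> real \<Rightarrow> real \<Rightarrow> real \<Rightarrow> real \<Rightarrow>
    (nat \<Rightarrow> complex) \<Rightarrow> (nat \<Rightarrow> real) \<Rightarrow> (nat \<Rightarrow> real) \<Rightarrow> bool" where
  "feasible K eta1 eta2 P sb h v x \<longleftrightarrow>
     (\<forall>k<K. sb \<le> x k \<and> x k \<le> U_coef eta1 eta2 P sb (h k) (v k))"

text \<open>Idealised run of Algorithm 2 (exact coordinate maximisation, threshold 0,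
  no iteration cap): xs n is the point after n single-coordinate updates;
  step n updates coordinate j = n mod K (cyclic order), replacing it by a maximiser
  over [sb, U_j] of J with the other coordinates fixed.\<close>
definition cyclic_ascent :: "nat \<Rightarrow> real \<Rightarrow> real \<Rightarrow> real \<Rightarrow> real \<Rightarrow> real \<Rightarrow>
    (nat \<Rightarrow> complex) \<Rightarrow> (nat \<Rightarrow> complex) \<Rightarrow> (nat \<Rightarrow> real) \<Rightarrow> (nat \<Rightarrow> nat \<Rightarrow> real) \<Rightarrow> bool" where
  "cyclic_ascent K eta1 eta2 P sb sD h g v xs \<longleftrightarrow>
     feasible K eta1 eta2 P sb h v (xs 0) \<and>
     (\<forall>n. let j = n mod K; U = U_coef eta1 eta2 P sb (h j) (v j) in
        (\<forall>k. k \<noteq> j \<longrightarrow> xs (Suc n) k = xs n k) \<and>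
        sb \<le> xs (Suc n) j \<and> xs (Suc n) j \<le> U \<and>
        (\<forall>t. sb \<le> t \<and> t \<le> U \<longrightarrow>
           J_obj K eta1 eta2 P sb sD h g v ((xs n)(j := t))
             \<le> J_obj K eta1 eta2 P sb sD h g v (xs (Suc n))))"

definition opt_val :: "nat \<Rightarrow> real \<Rightarrow> real \<Rightarrow> real \<Rightarrow> real \<Rightarrow> real \<Rightarrow>
    (nat \<Rightarrow> complex) \<Rightarrow> (nat \<Rightarrow> complex) \<Rightarrow> (nat \<Rightarrow> real) \<Rightarrow> real" where
  "opt_val K eta1 eta2 P sb sD h g v =
     Sup (J_obj K eta1 eta2 P sb sD h g v ` {x. feasible K eta1 eta2 P sb h v x})"

end

theory Submission
  imports Defs
begin


definition hm :: "real \<Rightarrow> real \<Rightarrow> real \<Rightarrow> real" where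
  "hm e x1 x2 = 1 / ((1 - e) / x1 + e / x2)"

lemma hm_bounds:
  assumes "0 < lo" "lo \<le> x1" "x1 \<le> hi" "lo \<le> x2" "x2 \<le> hi" "0 \<le> e" "e \<le> 1"
  shows "lo \<le> hm e x1 x2 \<and> hm e x1 x2 \<le> hi"
proof -
  define W where "W = (1 - e) / x1 + e / x2"
  have a1: "1/hi \<le> 1/x1" "1/x1 \<le> 1/lo" "1/hi \<le> 1/x2" "1/x2 \<le> 1/lo"
    using assms by (auto simp: frac_le)
  have "W = (1-e)*(1/x1) + e*(1/x2)" by (simp add: W_def)
  hence w1: "1/hi \<le> W" "W \<le> 1/lo"
  proof -
    have "(1-e)*(1/hi) + e*(1/hi) \<le> (1-e)*(1/x1) + e*(1/x2)"
      using a1 assms by (intro add_mono mult_left_mono) auto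
    moreover have "(1-e)*(1/x1) + e*(1/x2) \<le> (1-e)*(1/lo) + e*(1/lo)"
      using a1 assms by (intro add_mono mult_left_mono) auto
    moreover have "(1-e)*(1/hi) + e*(1/hi) = 1/hi" "(1-e)*(1/lo) + e*(1/lo) = 1/lo" by (simp_all add: add_divide_distrib[symmetric])
    ultimately show "1/hi \<le> W" "W \<le> 1/lo" unfolding W_def by auto
  qed
  have hp: "hi > 0" using assms by linarith
  have Wp: "W > 0" using w1 hp by (smt (verit) divide_pos_pos)
  have "lo \<le> 1/W" using w1 assms Wp by (simp add: field_simps)
  moreover have "1/W \<le> hi" using w1 hp Wp by (simp add: field_simps)
  ultimately show ?thesis by (simp add: hm_def W_def)
qed

lemma hm_d:
  assumes "x1 > 0" "x2 > 0" "0 \<le> e" "e \<le> 1"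
  shows "c*(a - hm e x1 x2)*(sb / hm e x1 x2) = (1-e)*(c*(a-x1)*(sb/x1)) + e*(c*(a-x2)*(sb/x2))"
proof -
  define W where "W = (1 - e) / x1 + e / x2"
  have Wp: "W > 0"
  proof -
    have "(1-e)/x1 \<ge> 0" "e/x2 \<ge> 0" using assms by auto
    moreover have "(1-e)/x1 > 0 \<or> e/x2 > 0" using assms by (cases "e = 1") auto
    ultimately show ?thesis unfolding W_def by linarith
  qed
  have hW: "hm e x1 x2 = 1/W" by (simp add: hm_def W_def)
  have "c*(a - hm e x1 x2)*(sb / hm e x1 x2) = c*sb*(a*W - 1)"
    unfolding hW using Wp by (simp add: field_simps)
  also have "\<dots> = (1-e)*(c*sb*(a/x1 - 1)) + e*(c*sb*(a/x2-1))"
    by (simp add: W_def field_simps)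
  also have "\<dots> = (1-e)*(c*(a-x1)*(sb/x1)) + e*(c*(a-x2)*(sb/x2))"
    using assms by (simp add: field_simps)
  finally show ?thesis .
qed

lemma hm_am:
  assumes "x1 > 0" "x2 > 0" "0 \<le> e" "e \<le> 1"
  shows "hm e x1 x2 \<le> (1-e)*x1 + e*x2"
    and "0 < e \<Longrightarrow> e < 1 \<Longrightarrow> x1 \<noteq> x2 \<Longrightarrow> hm e x1 x2 < (1-e)*x1 + e*x2"
proof -
  define W where "W = (1 - e) / x1 + e / x2"
  have Wp: "W > 0"
  proof -
    have "(1-e)/x1 \<ge> 0" "e/x2 \<ge> 0" using assms by auto
    moreover have "(1-e)/x1 > 0 \<or> e/x2 > 0" using assms by (cases "e = 1") auto
    ultimately show ?thesis unfolding W_def by linarith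
  qed
  have hW: "hm e x1 x2 = 1/W" by (simp add: hm_def W_def)
  have key: "((1-e)*x1 + e*x2) * W - 1 = e*(1-e)*(x1-x2)^2/(x1*x2)"
    using assms unfolding W_def by (simp add: field_simps power2_eq_square)
  have nn: "e*(1-e)*(x1-x2)^2/(x1*x2) \<ge> 0" using assms by simp
  have "1 \<le> ((1-e)*x1 + e*x2) * W" using key nn by linarith
  thus "hm e x1 x2 \<le> (1-e)*x1 + e*x2" using Wp unfolding hW by (simp add: divide_le_eq)
  assume "0 < e" "e < 1" "x1 \<noteq> x2"
  hence "e*(1-e)*(x1-x2)^2/(x1*x2) > 0" using assms by simp
  hence "1 < ((1-e)*x1 + e*x2) * W" using key by linarith
  thus "hm e x1 x2 < (1-e)*x1 + e*x2" using Wp unfolding hW by (simp add: divide_less_eq)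
qed

lemma hm_f:
  assumes "x1 > 0" "x2 > 0" "0 \<le> e" "e \<le> 1" "c \<ge> 0"
  shows "c*(a - hm e x1 x2)*(1 - sb / hm e x1 x2) \<ge> (1-e)*(c*(a-x1)*(1 - sb/x1)) + e*(c*(a-x2)*(1-sb/x2))"
    and "0 < e \<Longrightarrow> e < 1 \<Longrightarrow> x1 \<noteq> x2 \<Longrightarrow> c > 0 \<Longrightarrow>
      c*(a - hm e x1 x2)*(1 - sb / hm e x1 x2) > (1-e)*(c*(a-x1)*(1 - sb/x1)) + e*(c*(a-x2)*(1-sb/x2))"
proof -
  define H where "H = hm e x1 x2"
  have Hp: "H > 0" using hm_bounds[of "min x1 x2" x1 "max x1 x2" x2 e] assms unfolding H_def
    by (smt (verit))
  have eq: "\<And>x. c*(a-x)*(1-sb/x) = c*(a-x) - c*(a-x)*(sb/x)"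
    by (simp add: algebra_simps)
  have dd: "c*(a - H)*(sb / H) = (1-e)*(c*(a-x1)*(sb/x1)) + e*(c*(a-x2)*(sb/x2))"
    using hm_d[OF assms(1-4)] by (simp add: H_def)
  have diff: "c*(a - H)*(1 - sb / H) - ((1-e)*(c*(a-x1)*(1 - sb/x1)) + e*(c*(a-x2)*(1-sb/x2)))
      = c*((1-e)*x1 + e*x2 - H)"
    using eq[of H] eq[of x1] eq[of x2] dd
    by (simp add: algebra_simps)
  show "c*(a - hm e x1 x2)*(1 - sb / hm e x1 x2) \<ge> (1-e)*(c*(a-x1)*(1 - sb/x1)) + e*(c*(a-x2)*(1-sb/x2))"
    using diff hm_am(1)[OF assms(1-4)] assms(5) unfolding H_def
    by (smt (verit) mult_nonneg_nonneg)
  assume "0 < e" "e < 1" "x1 \<noteq> x2" "c > 0"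
  thus "c*(a - hm e x1 x2)*(1 - sb / hm e x1 x2) > (1-e)*(c*(a-x1)*(1 - sb/x1)) + e*(c*(a-x2)*(1-sb/x2))"
    using diff hm_am(2)[OF assms(1-4)] unfolding H_def
    by (smt (verit) mult_pos_pos)
qed




lemma bw_real:
  fixes X :: "nat \<Rightarrow> real"
  assumes "\<And>n. lo \<le> X n \<and> X n \<le> hi"
  shows "\<exists>r l. strict_mono r \<and> (\<lambda>n. X (r n)) \<longlonglongrightarrow> l"
proof -
  obtain f where f: "strict_mono f" "monoseq (\<lambda>n. X (f n))" using seq_monosub by blast
  have "Bseq (\<lambda>n. X (f n))"
  proof (rule BseqI'[of _ "\<bar>lo\<bar> + \<bar>hi\<bar>"])
    fix n show "norm (X (f n)) \<le> \<bar>lo\<bar> + \<bar>hi\<bar>" using assms[of "f n"] by (auto simp: abs_if)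
  qed
  then have "convergent (\<lambda>n. X (f n))" using f(2) Bseq_monoseq_convergent by blast
  then show ?thesis using f(1) by (auto simp: convergent_def)
qed

lemma bw_finite:
  fixes X :: "nat \<Rightarrow> 'i \<Rightarrow> real"
  assumes "finite I" "\<And>n i. i \<in> I \<Longrightarrow> lo i \<le> X n i \<and> X n i \<le> hi i"
  shows "\<exists>\<sigma> y. strict_mono \<sigma> \<and> (\<forall>i\<in>I. (\<lambda>n. X (\<sigma> n) i) \<longlonglongrightarrow> y i)"
  using assms
proof (induction I rule: finite_induct)
  case empty
  show ?case by (rule exI[of _ id]) (auto simp: strict_mono_def)
next
  case (insert i I)
  then obtain \<sigma> y where s: "strict_mono \<sigma>" "\<forall>i\<in>I. (\<lambda>n. X (\<sigma> n) i) \<longlonglongrightarrow> y i" by blast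
  have "\<And>n. lo i \<le> X (\<sigma> n) i \<and> X (\<sigma> n) i \<le> hi i" using insert.prems by auto
  then obtain \<rho> l where r: "strict_mono \<rho>" "(\<lambda>n. X (\<sigma> (\<rho> n)) i) \<longlonglongrightarrow> l"
    using bw_real[of "lo i" "\<lambda>n. X (\<sigma> n) i" "hi i"] by blast
  have "strict_mono (\<sigma> \<circ> \<rho>)" using s(1) r(1) by (simp add: strict_mono_def)
  moreover have "\<forall>i'\<in>insert i I. (\<lambda>n. X ((\<sigma> \<circ> \<rho>) n) i') \<longlonglongrightarrow> (y(i:=l)) i'"
  proof
    fix i' assume "i' \<in> insert i I"
    show "(\<lambda>n. X ((\<sigma> \<circ> \<rho>) n) i') \<longlonglongrightarrow> (y(i:=l)) i'"
    proof (cases "i' = i")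
      case True thus ?thesis using r(2) by simp
    next
      case False
      hence "i' \<in> I" using \<open>i' \<in> insert i I\<close> by simp
      hence "((\<lambda>n. X (\<sigma> n) i') \<circ> \<rho>) \<longlonglongrightarrow> y i'" using s(2) r(1) LIMSEQ_subseq_LIMSEQ by blast
      thus ?thesis using False by (simp add: comp_def)
    qed
  qed
  ultimately show ?case by blast
qed

locale P2 =
  fixes K :: nat and c a U :: "nat \<Rightarrow> real" and sb sD :: real
  assumes K1: "K \<ge> 1" and sbp: "sb > 0" and sDp: "sD > 0"
    and cp: "\<And>k. k < K \<Longrightarrow> c k > 0" and Ua: "\<And>k. k < K \<Longrightarrow> U k \<le> a k"
begin

definition fk where "fk k t = c k * (a k - t) * (1 - sb / t)"
definition dk where "dk k t = c k * (a k - t) * (sb / t)"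
definition SS where "SS x = (\<Sum>k<K. sqrt (fk k (x k)))"
definition TT where "TT x = (\<Sum>k<K. dk k (x k)) + sD"
definition JJ where "JJ x = (SS x)^2 / TT x"
definition FF where "FF x \<longleftrightarrow> (\<forall>k<K. sb \<le> x k \<and> x k \<le> U k)"
definition CM where "CM x j \<longleftrightarrow> (\<forall>t. sb \<le> t \<and> t \<le> U j \<longrightarrow> JJ (x(j:=t)) \<le> JJ x)"

lemma fk_nonneg: "k < K \<Longrightarrow> sb \<le> t \<Longrightarrow> t \<le> U k \<Longrightarrow> fk k t \<ge> 0"
proof -
  assume h: "k < K" "sb \<le> t" "t \<le> U k"
  have "a k - t \<ge> 0" using Ua[OF h(1)] h by simp
  moreover have "1 - sb / t \<ge> 0" using h sbp by simp
  ultimately show ?thesis using cp[OF h(1)] by (simp add: fk_def)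
qed

lemma dk_nonneg: "k < K \<Longrightarrow> sb \<le> t \<Longrightarrow> t \<le> U k \<Longrightarrow> dk k t \<ge> 0"
proof -
  assume h: "k < K" "sb \<le> t" "t \<le> U k"
  have "a k - t \<ge> 0" using Ua[OF h(1)] h by simp
  moreover have "sb / t \<ge> 0" using h sbp by simp
  ultimately show ?thesis using cp[OF h(1)] unfolding dk_def by (intro mult_nonneg_nonneg) auto
qed

lemma TT_ge: "FF x \<Longrightarrow> TT x \<ge> sD"
proof -
  assume "FF x"
  hence "(\<Sum>k<K. dk k (x k)) \<ge> 0" unfolding FF_def using dk_nonneg by (intro sum_nonneg) auto
  thus ?thesis unfolding TT_def by simp
qed

lemma TT_pos: "FF x \<Longrightarrow> TT x > 0"
  using TT_ge sDp by fastforce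

lemma SS_nonneg: "FF x \<Longrightarrow> SS x \<ge> 0"
  unfolding SS_def FF_def using fk_nonneg by (intro sum_nonneg) auto

lemma SS_upd: "j < K \<Longrightarrow> SS (x(j:=t)) = (SS x - sqrt (fk j (x j))) + sqrt (fk j t)"
proof -
  assume j: "j < K"
  have r: "(\<Sum>k\<in>{..<K}-{j}. sqrt (fk k ((x(j:=t)) k))) = (\<Sum>k\<in>{..<K}-{j}. sqrt (fk k (x k)))"
    by (rule sum.cong) auto
  show ?thesis unfolding SS_def
    using sum.remove[of "{..<K}" j "\<lambda>k. sqrt (fk k ((x(j:=t)) k))"]
      sum.remove[of "{..<K}" j "\<lambda>k. sqrt (fk k (x k))"] j r by simp
qed

lemma TT_upd: "j < K \<Longrightarrow> TT (x(j:=t)) = TT x - dk j (x j) + dk j t"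
proof -
  assume j: "j < K"
  have r: "(\<Sum>k\<in>{..<K}-{j}. dk k ((x(j:=t)) k)) = (\<Sum>k\<in>{..<K}-{j}. dk k (x k))"
    by (rule sum.cong) auto
  show ?thesis unfolding TT_def
    using sum.remove[of "{..<K}" j "\<lambda>k. dk k ((x(j:=t)) k)"]
      sum.remove[of "{..<K}" j "\<lambda>k. dk k (x k)"] j r by simp
qed

lemma rest_nonneg: "FF x \<Longrightarrow> j < K \<Longrightarrow> SS x - sqrt (fk j (x j)) \<ge> 0"
proof -
  assume F: "FF x" and j: "j < K"
  have "SS x = sqrt (fk j (x j)) + (\<Sum>k\<in>{..<K}-{j}. sqrt (fk k (x k)))"
    unfolding SS_def using sum.remove[of "{..<K}" j "\<lambda>k. sqrt (fk k (x k))"] j by simp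
  moreover have "(\<Sum>k\<in>{..<K}-{j}. sqrt (fk k (x k))) \<ge> 0"
    using F fk_nonneg unfolding FF_def by (intro sum_nonneg) auto
  ultimately show ?thesis by linarith
qed

lemma JJ_cong: "(\<And>k. k < K \<Longrightarrow> x k = y k) \<Longrightarrow> JJ x = JJ y"
proof -
  assume h: "\<And>k. k < K \<Longrightarrow> x k = y k"
  have "SS x = SS y" unfolding SS_def by (rule sum.cong) (auto simp: h)
  moreover have "TT x = TT y" unfolding TT_def by (rule arg_cong[where f="\<lambda>s. s + sD"], rule sum.cong) (auto simp: h)
  ultimately show ?thesis by (simp add: JJ_def)
qed

lemma FF_upd: "FF x \<Longrightarrow> sb \<le> t \<Longrightarrow> t \<le> U j \<Longrightarrow> FF (x(j:=t))"
  unfolding FF_def by auto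

lemma JJ_upd:
  assumes "j < K"
  shows "JJ (x(j:=t)) = ((SS x - sqrt (fk j (x j))) + sqrt (fk j t))^2 / (TT x - dk j (x j) + dk j t)"
  unfolding JJ_def using SS_upd[OF assms] TT_upd[OF assms] by simp

end


context P2 begin

lemma fk_hm:
  assumes "j < K" "sb \<le> x1" "sb \<le> x2" "0 \<le> e" "e \<le> 1"
  shows "fk j (hm e x1 x2) \<ge> (1-e)*fk j x1 + e*fk j x2"
  using hm_f(1)[of x1 x2 e "c j" "a j" sb] assms sbp cp[OF assms(1)] unfolding fk_def by auto

lemma fk_hm_strict:
  assumes "j < K" "sb \<le> x1" "sb \<le> x2" "0 < e" "e < 1" "x1 \<noteq> x2"
  shows "fk j (hm e x1 x2) > (1-e)*fk j x1 + e*fk j x2"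
  using hm_f(2)[of x1 x2 e "c j" "a j" sb] assms sbp cp[OF assms(1)] unfolding fk_def by auto

lemma dk_hm:
  assumes "sb \<le> x1" "sb \<le> x2" "0 \<le> e" "e \<le> 1"
  shows "dk j (hm e x1 x2) = (1-e)*dk j x1 + e*dk j x2"
  using hm_d[of x1 x2 e "c j" "a j" sb] assms sbp unfolding dk_def by auto

lemma hm_in:
  assumes "sb \<le> x1" "x1 \<le> U j" "sb \<le> x2" "x2 \<le> U j" "0 \<le> e" "e \<le> 1"
  shows "sb \<le> hm e x1 x2 \<and> hm e x1 x2 \<le> U j"
  using hm_bounds[of sb x1 "U j" x2 e] assms sbp by auto

lemma lin_bound:
  assumes F: "FF x" and j: "j < K" and cm: "CM x j" and Sp: "SS x > 0"
    and t: "sb \<le> t" "t \<le> U j"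
  shows "fk j t \<le> sqrt (fk j (x j)) * (sqrt (fk j (x j)) + SS x / TT x * (dk j t - dk j (x j)))"
proof (rule ccontr)
  define p where "p = sqrt (fk j (x j))"
  define A where "A = SS x - p"
  define T0 where "T0 = TT x"
  define L where "L = JJ x"
  define lam where "lam = SS x / T0"
  define D where "D = dk j t - dk j (x j)"
  define u where "u = fk j t - p^2"
  assume "\<not> ?thesis"
  hence neg: "fk j t > p * (p + lam * D)" by (simp add: p_def lam_def D_def T0_def)
  have xj: "sb \<le> x j" "x j \<le> U j" using F j by (auto simp: FF_def)
  have fxj: "fk j (x j) \<ge> 0" using fk_nonneg[OF j xj] .
  have ft: "fk j t \<ge> 0" using fk_nonneg[OF j t] .
  have pp: "p \<ge> 0" "p^2 = fk j (x j)" using fxj by (auto simp: p_def)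
  have T0p: "T0 > 0" using TT_pos[OF F] by (simp add: T0_def)
  have Ap: "A \<ge> 0" using rest_nonneg[OF F j] by (simp add: A_def p_def)
  have SSe: "SS x = A + p" by (simp add: A_def)
  have Le: "L = (A+p)^2 / T0" by (simp add: L_def JJ_def SSe T0_def)
  have LT: "L * T0 = (A+p)^2" using T0p by (simp add: Le)
  have Llam: "L = (A+p) * lam" using T0p by (simp add: Le lam_def SSe power2_eq_square)
  define chi where "chi e = u*(2*A + sqrt(p^2+e*u) + p) - L*D*(sqrt(p^2+e*u)+p)" for e
  have "isCont chi 0" unfolding chi_def by (intro continuous_intros)
  hence lim: "(chi \<longlongrightarrow> chi 0) (at 0)" by (simp add: isCont_def)
  have "chi 0 = 2*(A+p)*(u - p*lam*D)" using pp(1) by (simp add: chi_def Llam algebra_simps)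
  moreover have "u - p*lam*D > 0" using neg by (simp add: u_def algebra_simps power2_eq_square)
  moreover have "A + p > 0" using Sp SSe by simp
  ultimately have chi0: "chi 0 > 0" by simp
  have "eventually (\<lambda>e. 0 < chi e) (at 0)" using order_tendstoD(1)[OF lim chi0] .
  then obtain d where d: "d > 0" "\<And>e. e \<noteq> 0 \<Longrightarrow> dist e 0 < d \<Longrightarrow> 0 < chi e"
    unfolding eventually_at by auto
  define e where "e = min (d/2) (1/2)"
  have e: "0 < e" "e < 1" "e \<le> 1" "0 \<le> e" using d by (auto simp: e_def)
  have chie: "chi e > 0" using d(2)[of e] e d by (auto simp: e_def dist_real_def)
  define x' where "x' = hm e (x j) t"
  have x'in: "sb \<le> x' \<and> x' \<le> U j" using hm_in[OF xj t e(4) e(3)] by (simp add: x'_def)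
  have fx': "fk j x' \<ge> p^2 + e*u"
    using fk_hm[OF j xj(1) t(1) e(4) e(3)] pp by (simp add: x'_def u_def algebra_simps)
  have dx': "dk j x' = dk j (x j) + e*D"
    using dk_hm[OF xj(1) t(1) e(4) e(3)] by (simp add: x'_def D_def algebra_simps)
  define r where "r = sqrt (p^2 + e*u)"
  have nn: "p^2 + e*u \<ge> 0"
  proof -
    have "p^2 + e*u = (1-e)*p^2 + e*fk j t" by (simp add: u_def algebra_simps)
    thus ?thesis using e ft by simp
  qed
  have r2: "r^2 = p^2 + e*u" using nn by (simp add: r_def)
  have r0: "r \<ge> 0" using nn by (simp add: r_def)
  have rle: "r \<le> sqrt (fk j x')" using fx' by (simp add: r_def)
  have rp: "r + p > 0"
  proof (cases "p > 0")
    case True thus ?thesis using r0 by simp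
  next
    case False
    hence "p = 0" using pp by simp
    hence "u > 0" using neg by (simp add: u_def)
    hence "r > 0" using e \<open>p = 0\<close> by (simp add: r_def)
    thus ?thesis using \<open>p = 0\<close> by simp
  qed
  have Fx': "FF (x(j:=x'))" using FF_upd[OF F] x'in by simp
  have Tx': "TT x - dk j (x j) + dk j x' = T0 + e*D" by (simp add: dx' T0_def)
  have T'p: "T0 + e*D > 0" using TT_pos[OF Fx'] TT_upd[OF j, of x x'] Tx' by simp
  have "r - p = e*u/(r+p)"
  proof -
    have "(r - p)*(r+p) = e*u" using r2 by (simp add: algebra_simps power2_eq_square)
    thus ?thesis using rp by (simp add: field_simps)
  qed
  hence "(A+r)^2 - (A+p)^2 = e*u*(2*A+r+p)/(r+p)"
  proof -
    assume h: "r - p = e*u/(r+p)"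
    have "(A+r)^2 - (A+p)^2 = (r-p)*(2*A+r+p)" by (simp add: power2_eq_square algebra_simps)
    also have "\<dots> = e*u*(2*A+r+p)/(r+p)" using h by simp
    finally show ?thesis .
  qed
  hence "(A+r)^2 - L*(T0 + e*D) = e * chi e / (r+p)"
  proof -
    assume h: "(A+r)^2 - (A+p)^2 = e*u*(2*A+r+p)/(r+p)"
    have ce: "chi e = u*(2*A + r + p) - L*D*(r+p)" by (simp add: chi_def r_def)
    have "(A+r)^2 - L*(T0 + e*D) = e*u*(2*A+r+p)/(r+p) - L*e*D"
      using h LT by (simp add: algebra_simps)
    also have "\<dots> = e * chi e / (r+p)" using rp unfolding ce by (simp add: field_simps)
    finally show ?thesis .
  qed
  moreover have "e * chi e / (r+p) > 0" using e chie rp by simp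
  ultimately have gt: "(A+r)^2 > L*(T0+e*D)" by linarith
  have "(A+r)^2 \<le> (A + sqrt (fk j x'))^2" using rle Ap r0 by (intro power_mono) auto
  hence "L*(T0+e*D) < (A + sqrt (fk j x'))^2" using gt by linarith
  hence "L < (A + sqrt (fk j x'))^2 / (T0 + e*D)" using T'p by (simp add: field_simps)
  also have "\<dots> = JJ (x(j:=x'))" using JJ_upd[OF j, of x x'] Tx' by (simp add: A_def p_def)
  finally have "L < JJ (x(j:=x'))" .
  moreover have "JJ (x(j:=x')) \<le> L" using cm x'in by (simp add: CM_def L_def)
  ultimately show False by simp
qed

end


context P2 begin

lemma sqrt_amgm: "0 \<le> p \<Longrightarrow> 0 \<le> m \<Longrightarrow> 2 * sqrt (p*m) \<le> p + m"
  using arith_geo_mean_sqrt[of p m] by simp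

lemma uniq:
  assumes F: "FF x" and j: "j < K" and cm: "CM x j"
    and t: "sb \<le> t" "t \<le> U j" and ge: "JJ (x(j:=t)) \<ge> JJ x"
  shows "t = x j"
proof (rule ccontr)
  assume ne: "t \<noteq> x j"
  define p where "p = sqrt (fk j (x j))"
  define A where "A = SS x - p"
  define T0 where "T0 = TT x"
  define L where "L = JJ x"
  define lam where "lam = SS x / T0"
  define D where "D = dk j t - dk j (x j)"
  have xj: "sb \<le> x j" "x j \<le> U j" using F j by (auto simp: FF_def)
  have fxj: "fk j (x j) \<ge> 0" using fk_nonneg[OF j xj] .
  have ft: "fk j t \<ge> 0" using fk_nonneg[OF j t] .
  have pp: "p \<ge> 0" "p^2 = fk j (x j)" using fxj by (auto simp: p_def)
  have T0p: "T0 > 0" using TT_pos[OF F] by (simp add: T0_def)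
  have Ap: "A \<ge> 0" using rest_nonneg[OF F j] by (simp add: A_def p_def)
  have SSe: "SS x = A + p" by (simp add: A_def)
  have Le: "L = (A+p)^2 / T0" by (simp add: L_def JJ_def SSe T0_def)
  have Llam: "L = (A+p) * lam" using T0p by (simp add: Le lam_def SSe power2_eq_square)
  define xm where "xm = hm (1/2) (x j) t"
  have xmin: "sb \<le> xm \<and> xm \<le> U j" using hm_in[OF xj t] by (simp add: xm_def)
  have fxm: "fk j xm > (1/2)*p^2 + (1/2)*fk j t"
    using fk_hm_strict[OF j xj(1) t(1), of "1/2"] ne pp by (simp add: xm_def)
  have dxm: "dk j xm = dk j (x j) + D/2"
    using dk_hm[OF xj(1) t(1), of "1/2" j] by (simp add: xm_def D_def field_simps)
  have Fxm: "FF (x(j:=xm))" using FF_upd[OF F] xmin by simp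
  have Txm: "TT (x(j:=xm)) > 0" using TT_pos[OF Fxm] .
  have "(1/2)*p^2 + (1/2)*fk j t \<ge> 0" using ft by simp
  hence fxm0: "fk j xm > 0" using fxm by linarith
  show False
  proof (cases "SS x = 0")
    case True
    hence A0: "A = 0" and p0: "p = 0" using Ap pp SSe by linarith+
    have "JJ (x(j:=xm)) = (sqrt (fk j xm))^2 / TT (x(j:=xm))"
      using SS_upd[OF j, of x xm] by (simp add: JJ_def SSe A0 p0 flip: p_def)
    also have "\<dots> > 0" using fxm0 Txm by simp
    finally have "JJ (x(j:=xm)) > 0" .
    moreover have "JJ x = 0" using True by (simp add: JJ_def)
    ultimately show False using cm xmin by (auto simp: CM_def)
  next
    case False
    hence Sp: "SS x > 0" using SS_nonneg[OF F] by simp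
    have "fk j xm \<le> p * (p + lam * (dk j xm - dk j (x j)))"
      using lin_bound[OF F j cm Sp, of xm] xmin by (simp add: p_def lam_def T0_def)
    hence lb: "fk j t < p * (p + lam * D)" using fxm dxm
      by (simp add: algebra_simps power2_eq_square)
    define m where "m = p + lam * D"
    have p0: "p > 0"
    proof (rule ccontr)
      assume "\<not> p > 0" hence "p = 0" using pp by simp
      thus False using lb ft by simp
    qed
    have m0: "m \<ge> 0"
    proof (rule ccontr)
      assume "\<not> m \<ge> 0" hence "p * m < 0" using p0 by (simp add: mult_pos_neg)
      thus False using lb ft by (simp add: m_def)
    qed
    have "sqrt (fk j t) < sqrt (p*m)" using lb by (simp add: m_def)
    hence "(A + sqrt (fk j t))^2 < (A + sqrt (p*m))^2"
      using Ap ft by (intro power_strict_mono) auto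
    also have "\<dots> \<le> (A+p)*(A+m)"
    proof -
      have "(A + sqrt (p*m))^2 = A^2 + A*(2*sqrt(p*m)) + p*m"
        using p0 m0 by (simp add: power2_eq_square algebra_simps real_sqrt_mult)
      also have "\<dots> \<le> A^2 + A*(p+m) + p*m"
        using mult_left_mono[OF sqrt_amgm[of p m] Ap] p0 m0 by linarith
      also have "\<dots> = (A+p)*(A+m)" by (simp add: algebra_simps power2_eq_square)
      finally show ?thesis .
    qed
    also have "\<dots> = L * (T0 + D)"
    proof -
      have "(A+p)*(A+m) = (A+p)^2 + ((A+p)*lam)*D" by (simp add: m_def power2_eq_square algebra_simps)
      also have "(A+p)^2 = L*T0" using T0p by (simp add: Le)
      also have "(A+p)*lam = L" by (simp add: Llam)
      finally show ?thesis by (simp add: algebra_simps)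
    qed
    finally have lt: "(A + sqrt (fk j t))^2 < L * (T0 + D)" .
    have Ft: "FF (x(j:=t))" using FF_upd[OF F] t by simp
    have "TT (x(j:=t)) = T0 + D" using TT_upd[OF j, of x t] by (simp add: T0_def D_def)
    hence T'p: "T0 + D > 0" using TT_pos[OF Ft] by simp
    have "JJ (x(j:=t)) = (A + sqrt (fk j t))^2 / (T0 + D)"
      using JJ_upd[OF j, of x t] by (simp add: A_def p_def T0_def D_def)
    also have "\<dots> < L" using lt T'p by (simp add: field_simps)
    finally show False using ge by (simp add: L_def)
  qed
qed

end


context P2 begin

lemma global:
  assumes F: "FF x" and cm: "\<And>j. j < K \<Longrightarrow> CM x j" and Fz: "FF z"
  shows "JJ z \<le> JJ x"
proof (cases "SS x = 0")
  case True
  have allz: "\<forall>k\<in>{..<K}. sqrt (fk k (x k)) = 0"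
    using True F fk_nonneg unfolding SS_def FF_def
    by (subst sum_nonneg_eq_0_iff[symmetric]) auto
  have J0: "JJ x = 0" using True by (simp add: JJ_def)
  have zk: "sqrt (fk k (z k)) = 0" if k: "k < K" for k
  proof -
    have zin: "sb \<le> z k" "z k \<le> U k" using Fz k by (auto simp: FF_def)
    have Fu: "FF (x(k:=z k))" using FF_upd[OF F zin] .
    have Tp: "TT (x(k:=z k)) > 0" using TT_pos[OF Fu] .
    have "JJ (x(k:=z k)) = (sqrt (fk k (z k)))^2 / TT (x(k:=z k))"
      using SS_upd[OF k, of x "z k"] True allz k by (simp add: JJ_def)
    also have "\<dots> = fk k (z k) / TT (x(k:=z k))" using fk_nonneg[OF k zin] by simp
    finally have "fk k (z k) / TT (x(k:=z k)) \<le> 0" using cm[OF k] zin J0 by (auto simp: CM_def)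
    hence "fk k (z k) \<le> 0" using Tp by (simp add: divide_le_0_iff)
    thus ?thesis using fk_nonneg[OF k zin] by simp
  qed
  have "SS z = 0" unfolding SS_def using zk by simp
  hence "JJ z = 0" by (simp add: JJ_def)
  thus ?thesis using J0 by simp
next
  case False
  hence Sp: "SS x > 0" using SS_nonneg[OF F] by simp
  define lam where "lam = SS x / TT x"
  define p where "p k = sqrt (fk k (x k))" for k
  define m where "m k = p k + lam * (dk k (z k) - dk k (x k))" for k
  have Tx: "TT x > 0" using TT_pos[OF F] .
  have Tz: "TT z > 0" using TT_pos[OF Fz] .
  have lamp: "lam > 0" using Sp Tx by (simp add: lam_def)
  have pnn: "p k \<ge> 0" if "k < K" for k
    using that F fk_nonneg by (auto simp: p_def FF_def)
  have bnd: "fk k (z k) \<le> p k * m k" if k: "k < K" for k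
    using lin_bound[OF F k cm[OF k] Sp, of "z k"] Fz k by (auto simp: FF_def p_def m_def lam_def)
  have mnn: "m k \<ge> 0" if k: "k < K" for k
  proof (cases "p k > 0")
    case True
    have "fk k (z k) \<ge> 0" using fk_nonneg[OF k] Fz k by (auto simp: FF_def)
    hence "p k * m k \<ge> 0" using bnd[OF k] by linarith
    thus ?thesis using True by (simp add: zero_le_mult_iff)
  next
    case False
    hence p0: "p k = 0" using pnn[OF k] by simp
    have xin: "sb \<le> x k" "x k \<le> U k" and zin: "sb \<le> z k" "z k \<le> U k"
      using F Fz k by (auto simp: FF_def)
    have "z k = x k"
    proof (rule ccontr)
      assume ne: "z k \<noteq> x k"
      define xm where "xm = hm (1/2) (x k) (z k)"
      have xmin: "sb \<le> xm \<and> xm \<le> U k" using hm_in[OF xin zin] by (simp add: xm_def)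
      have "fk k xm > (1/2)*fk k (x k) + (1/2)*fk k (z k)"
        using fk_hm_strict[OF k xin(1) zin(1), of "1/2"] ne by (simp add: xm_def)
      moreover have "fk k (x k) \<ge> 0" "fk k (z k) \<ge> 0" using fk_nonneg[OF k] xin zin by auto
      ultimately have "fk k xm > 0" by linarith
      moreover have "fk k xm \<le> p k * (p k + SS x / TT x * (dk k xm - dk k (x k)))"
        using lin_bound[OF F k cm[OF k] Sp, of xm] xmin by (simp add: p_def)
      ultimately show False using p0 by simp
    qed
    thus ?thesis using p0 by (simp add: m_def)
  qed
  define P where "P = SS x"
  define M where "M = (\<Sum>k<K. m k)"
  have PS: "P = (\<Sum>k<K. p k)" by (simp add: P_def SS_def p_def)
  have "M = P + lam * ((\<Sum>k<K. dk k (z k)) - (\<Sum>k<K. dk k (x k)))"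
    by (simp add: M_def m_def PS sum.distrib sum_distrib_left[symmetric] sum_subtractf)
  also have "\<dots> = P + lam * (TT z - TT x)" by (simp add: TT_def)
  also have "\<dots> = lam * TT z" using Tx by (simp add: lam_def P_def field_simps)
  finally have Me: "M = lam * TT z" .
  have Mp: "M > 0" using Me lamp Tz by simp
  have Pp: "P > 0" using Sp by (simp add: P_def)
  define \<beta> where "\<beta> = sqrt (M/P)"
  have bp: "\<beta> > 0" using Mp Pp by (simp add: \<beta>_def)
  have b2: "\<beta>^2 = M/P" using Mp Pp by (simp add: \<beta>_def)
  have trm: "sqrt (fk k (z k)) \<le> (p k * \<beta> + m k / \<beta>)/2" if k: "k < K" for k
  proof -
    have "sqrt (fk k (z k)) \<le> sqrt (p k * m k)" using bnd[OF k] by simp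
    also have "p k * m k = (p k * \<beta>) * (m k / \<beta>)" using bp by simp
    also have "sqrt \<dots> \<le> (p k * \<beta> + m k / \<beta>)/2"
      using pnn[OF k] mnn[OF k] bp by (intro arith_geo_mean_sqrt) auto
    finally show ?thesis .
  qed
  have "SS z \<le> (\<Sum>k<K. (p k * \<beta> + m k / \<beta>)/2)"
    unfolding SS_def by (rule sum_mono) (use trm in auto)
  also have "\<dots> = (P * \<beta> + M / \<beta>)/2"
    by (simp add: PS M_def sum_divide_distrib[symmetric] sum.distrib sum_distrib_right)
  also have "M / \<beta> = P * \<beta>"
  proof -
    have "M = P * \<beta>^2" using b2 Pp by simp
    thus ?thesis using bp by (simp add: power2_eq_square)
  qed
  finally have Sz: "SS z \<le> P * \<beta>" by simp
  have "(SS z)^2 \<le> (P*\<beta>)^2" using Sz SS_nonneg[OF Fz] by (intro power_mono) auto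
  also have "\<dots> = P * (P * \<beta>^2)" by (simp add: power2_eq_square)
  also have "\<dots> = P * M" using b2 Pp by simp
  also have "\<dots> = JJ x * TT z" using Tx by (simp add: Me lam_def P_def JJ_def power2_eq_square field_simps)
  finally have "(SS z)^2 \<le> JJ x * TT z" .
  thus ?thesis using Tz by (simp add: JJ_def divide_le_eq)
qed

end


context P2 begin

lemma JJ_tendsto:
  assumes Fz: "FF z" and X: "\<And>k. k < K \<Longrightarrow> (\<lambda>n. X n k) \<longlonglongrightarrow> z k"
  shows "(\<lambda>n. JJ (X n)) \<longlonglongrightarrow> JJ z"
proof -
  have zpos: "z k \<noteq> 0" if "k < K" for k using Fz that sbp by (auto simp: FF_def)
  have S: "(\<lambda>n. SS (X n)) \<longlonglongrightarrow> SS z" unfolding SS_def fk_def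
    by (rule tendsto_sum, intro tendsto_intros) (use X zpos in auto)
  have T: "(\<lambda>n. TT (X n)) \<longlonglongrightarrow> TT z" unfolding TT_def dk_def
    by (intro tendsto_add tendsto_const tendsto_sum, intro tendsto_intros) (use X zpos in auto)
  have "TT z \<noteq> 0" using TT_pos[OF Fz] by simp
  thus ?thesis unfolding JJ_def using S T by (intro tendsto_intros) auto
qed

lemma JJ_bound: "FF x \<Longrightarrow> JJ x \<le> (\<Sum>k<K. sqrt (c k * a k))^2 / sD"
proof -
  assume F: "FF x"
  have "sqrt (fk k (x k)) \<le> sqrt (c k * a k)" if k: "k < K" for k
  proof -
    have xin: "sb \<le> x k" "x k \<le> U k" using F k by (auto simp: FF_def)
    have xp: "x k > 0" using xin sbp by simp
    have am: "a k - x k \<ge> 0" using Ua[OF k] xin by simp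
    have q: "0 \<le> 1 - sb / x k" "1 - sb / x k \<le> 1" using xin xp sbp by auto
    have "(a k - x k) * (1 - sb / x k) \<le> (a k - x k) * 1" using am q by (intro mult_left_mono) auto
    also have "\<dots> \<le> a k" using xp by simp
    finally have "c k * ((a k - x k) * (1 - sb / x k)) \<le> c k * a k"
      using cp[OF k] by (intro mult_left_mono) auto
    thus ?thesis by (simp add: fk_def mult.assoc)
  qed
  hence "SS x \<le> (\<Sum>k<K. sqrt (c k * a k))" unfolding SS_def by (intro sum_mono) auto
  hence "(SS x)^2 \<le> (\<Sum>k<K. sqrt (c k * a k))^2" using SS_nonneg[OF F] by (intro power_mono) auto
  moreover have "(SS x)^2 / TT x \<le> (SS x)^2 / sD"
    using TT_ge[OF F] sDp by (intro divide_left_mono) auto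
  moreover have "(SS x)^2 / sD \<le> (\<Sum>k<K. sqrt (c k * a k))^2 / sD"
    using \<open>(SS x)^2 \<le> _\<close> sDp by (intro divide_right_mono) auto
  ultimately show ?thesis unfolding JJ_def by linarith
qed

lemma main:
  assumes s0: "FF (xs 0)"
    and s1: "\<And>n k. k \<noteq> n mod K \<Longrightarrow> xs (Suc n) k = xs n k"
    and s2: "\<And>n. sb \<le> xs (Suc n) (n mod K) \<and> xs (Suc n) (n mod K) \<le> U (n mod K)"
    and s3: "\<And>n t. sb \<le> t \<Longrightarrow> t \<le> U (n mod K) \<Longrightarrow> JJ ((xs n)(n mod K := t)) \<le> JJ (xs (Suc n))"
  shows "\<exists>L. (\<lambda>n. JJ (xs n)) \<longlonglongrightarrow> L \<and> Sup (JJ ` {x. FF x}) = L \<and>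
     (\<forall>y r. strict_mono r \<and> (\<forall>k<K. (\<lambda>n. xs (r n) k) \<longlonglongrightarrow> y k) \<longrightarrow> FF y \<and> JJ y = L)"
proof -
  have modK: "n mod K < K" for n using K1 by simp
  have feas: "FF (xs n)" for n
  proof (induction n)
    case 0 show ?case using s0 .
  next
    case (Suc n)
    show ?case unfolding FF_def
    proof (intro allI impI)
      fix k assume k: "k < K"
      show "sb \<le> xs (Suc n) k \<and> xs (Suc n) k \<le> U k"
      proof (cases "k = n mod K")
        case True thus ?thesis using s2[of n] by simp
      next
        case False thus ?thesis using s1[OF False] Suc k by (simp add: FF_def)
      qed
    qed
  qed
  have inc: "incseq (\<lambda>n. JJ (xs n))"
  proof (rule incseq_SucI)
    fix n
    have "sb \<le> xs n (n mod K) \<and> xs n (n mod K) \<le> U (n mod K)" using feas[of n] modK by (simp add: FF_def)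
    thus "JJ (xs n) \<le> JJ (xs (Suc n))" using s3[of "xs n (n mod K)" n] by simp
  qed
  have bnd: "\<forall>i. JJ (xs i) \<le> (\<Sum>k<K. sqrt (c k * a k))^2 / sD" using JJ_bound[OF feas] by simp
  obtain L where lim: "(\<lambda>n. JJ (xs n)) \<longlonglongrightarrow> L" and "\<forall>i. JJ (xs i) \<le> L"
    by (rule incseq_convergent[OF inc bnd])
  define X where "X n ik = xs (n*K + fst ik) (snd ik)" for n ik
  have "\<exists>\<sigma> y. strict_mono \<sigma> \<and> (\<forall>ik\<in>{..K} \<times> {..<K}. (\<lambda>n. X (\<sigma> n) ik) \<longlonglongrightarrow> y ik)"
    by (rule bw_finite[of _ "\<lambda>_. sb" _ "\<lambda>ik. U (snd ik)"]) (use feas in \<open>auto simp: FF_def X_def\<close>)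
  then obtain \<sigma> y where sig: "strict_mono \<sigma>"
    and yc: "\<forall>ik\<in>{..K} \<times> {..<K}. (\<lambda>n. X (\<sigma> n) ik) \<longlonglongrightarrow> y ik" by blast
  define Y where "Y i k = y (i, k)" for i k
  have conv: "(\<lambda>n. xs (\<sigma> n * K + i) k) \<longlonglongrightarrow> Y i k" if "i \<le> K" "k < K" for i k
    using yc that by (auto simp: X_def Y_def)
  have smono: "strict_mono (\<lambda>n. \<sigma> n * K + i)" for i
    using sig K1 by (auto simp: strict_mono_def)
  have FY: "FF (Y i)" if "i \<le> K" for i
    unfolding FF_def
  proof (intro allI impI conjI)
    fix k assume k: "k < K"
    show "sb \<le> Y i k"
      by (rule LIMSEQ_le_const[OF conv[OF that k]]) (use feas k in \<open>auto simp: FF_def\<close>)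
    show "Y i k \<le> U k"
      by (rule LIMSEQ_le_const2[OF conv[OF that k]]) (use feas k in \<open>auto simp: FF_def\<close>)
  qed
  have JY: "JJ (Y i) = L" if "i \<le> K" for i
  proof -
    have a1: "(\<lambda>n. JJ (xs (\<sigma> n * K + i))) \<longlonglongrightarrow> JJ (Y i)"
      by (rule JJ_tendsto[OF FY[OF that]]) (use conv that in auto)
    have "((\<lambda>n. JJ (xs n)) \<circ> (\<lambda>n. \<sigma> n * K + i)) \<longlonglongrightarrow> L"
      using LIMSEQ_subseq_LIMSEQ[OF lim smono] .
    hence "(\<lambda>n. JJ (xs (\<sigma> n * K + i))) \<longlonglongrightarrow> L" by (simp add: comp_def)
    thus ?thesis using a1 LIMSEQ_unique by blast
  qed
  have cmY: "CM (Y i) i" if i: "i < K" for i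
    unfolding CM_def
  proof (intro allI impI)
    fix t assume t: "sb \<le> t \<and> t \<le> U i"
    have Ft: "FF ((Y i)(i:=t))" using FF_upd[OF FY] t i by simp
    have md: "(\<sigma> n * K + i) mod K = i" for n using i by simp
    have l1: "(\<lambda>n. JJ ((xs (\<sigma> n * K + i))(i:=t))) \<longlonglongrightarrow> JJ ((Y i)(i:=t))"
    proof (rule JJ_tendsto[OF Ft])
      fix k assume k: "k < K"
      show "(\<lambda>n. ((xs (\<sigma> n * K + i))(i:=t)) k) \<longlonglongrightarrow> ((Y i)(i:=t)) k"
        using conv[of i k] i k by (cases "k = i") auto
    qed
    have l2: "(\<lambda>n. JJ (xs (\<sigma> n * K + Suc i))) \<longlonglongrightarrow> JJ (Y (Suc i))"
      by (rule JJ_tendsto[OF FY]) (use conv[of "Suc i"] i in auto)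
    have "JJ ((Y i)(i:=t)) \<le> JJ (Y (Suc i))"
    proof (rule LIMSEQ_le[OF l1 l2], intro exI allI impI)
      fix n
      show "JJ ((xs (\<sigma> n * K + i))(i:=t)) \<le> JJ (xs (\<sigma> n * K + Suc i))"
        using s3[of t "\<sigma> n * K + i"] t md by simp
    qed
    thus "JJ ((Y i)(i:=t)) \<le> JJ (Y i)" using JY i by simp
  qed
  have step: "\<forall>k<K. Y (Suc i) k = Y i k" if i: "i < K" for i
  proof -
    have md: "(\<sigma> n * K + i) mod K = i" for n using i by simp
    have agree: "Y (Suc i) k = Y i k" if k: "k < K" "k \<noteq> i" for k
    proof -
      have "(\<lambda>n. xs (\<sigma> n * K + Suc i) k) = (\<lambda>n. xs (\<sigma> n * K + i) k)"
        using s1 md k by (simp add: fun_eq_iff)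
      hence "(\<lambda>n. xs (\<sigma> n * K + i) k) \<longlonglongrightarrow> Y (Suc i) k" using conv[of "Suc i" k] i k by simp
      thus ?thesis using conv[of i k] i k LIMSEQ_unique by auto
    qed
    have "Y (Suc i) i = Y i i"
    proof (rule uniq[of "Y i" i])
      show "FF (Y i)" using FY i by simp
      show "i < K" using i .
      show "CM (Y i) i" using cmY[OF i] .
      show "sb \<le> Y (Suc i) i" "Y (Suc i) i \<le> U i" using FY[of "Suc i"] i by (auto simp: FF_def)
      have "JJ ((Y i)(i := Y (Suc i) i)) = JJ (Y (Suc i))"
        by (rule JJ_cong) (use agree in auto)
      thus "JJ (Y i) \<le> JJ ((Y i)(i := Y (Suc i) i))" using JY i by simp
    qed
    thus ?thesis using agree by auto
  qed
  have allsame: "\<forall>k<K. Y i k = Y 0 k" if "i \<le> K" for i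
    using that
  proof (induction i)
    case 0 show ?case by simp
  next
    case (Suc i) thus ?case using step[of i] by simp
  qed
  have cm0: "CM (Y 0) j" if j: "j < K" for j
    unfolding CM_def
  proof (intro allI impI)
    fix t assume t: "sb \<le> t \<and> t \<le> U j"
    have "JJ ((Y 0)(j:=t)) = JJ ((Y j)(j:=t))"
      by (rule JJ_cong) (use allsame[of j] j in auto)
    also have "\<dots> \<le> JJ (Y j)" using cmY[OF j] t by (simp add: CM_def)
    also have "\<dots> = JJ (Y 0)" using JY[of j] JY[of 0] j by simp
    finally show "JJ ((Y 0)(j:=t)) \<le> JJ (Y 0)" .
  qed
  have glob: "JJ z \<le> L" if "FF z" for z
    using global[OF FY[of 0] cm0 that] JY[of 0] by simp
  have sup: "Sup (JJ ` {x. FF x}) = L"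
  proof (rule cSup_eq_maximum)
    show "L \<in> JJ ` {x. FF x}" using FY[of 0] JY[of 0] by (auto intro!: image_eqI[of _ _ "Y 0"])
    show "\<And>v. v \<in> JJ ` {x. FF x} \<Longrightarrow> v \<le> L" using glob by auto
  qed
  have sub: "FF y \<and> JJ y = L" if r: "strict_mono r" and yl: "\<forall>k<K. (\<lambda>n. xs (r n) k) \<longlonglongrightarrow> y k" for y r
  proof -
    have Fy: "FF y" unfolding FF_def
    proof (intro allI impI conjI)
      fix k assume k: "k < K"
      show "sb \<le> y k"
        by (rule LIMSEQ_le_const[of "\<lambda>n. xs (r n) k"]) (use yl feas k in \<open>auto simp: FF_def\<close>)
      show "y k \<le> U k"
        by (rule LIMSEQ_le_const2[of "\<lambda>n. xs (r n) k"]) (use yl feas k in \<open>auto simp: FF_def\<close>)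
    qed
    have a1: "(\<lambda>n. JJ (xs (r n))) \<longlonglongrightarrow> JJ y"
      by (rule JJ_tendsto[OF Fy]) (use yl in auto)
    have "((\<lambda>n. JJ (xs n)) \<circ> r) \<longlonglongrightarrow> L" using LIMSEQ_subseq_LIMSEQ[OF lim r] .
    hence "(\<lambda>n. JJ (xs (r n))) \<longlonglongrightarrow> L" by (simp add: comp_def)
    hence "JJ y = L" using a1 LIMSEQ_unique by blast
    thus ?thesis using Fy by simp
  qed
  show ?thesis using lim sup sub by blast
qed

end



lemma U_le_a:
  assumes "0 < eta1" "0 < eta2" "P > 0" "hk \<noteq> 0"
  shows "U_coef eta1 eta2 P sb hk vk \<le> a_coef eta1 eta2 P sb hk vk"
proof -
  define H where "H = (cmod hk)^2"
  have Hp: "H > 0" using assms by (simp add: H_def)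
  have PH: "P * H > 0" using Hp assms by simp
  show ?thesis
  proof (cases "vk \<ge> 0")
    case True
    have "vk / (eta1 * eta2 * P * H) \<ge> 0" "vk / (eta1 * eta2) \<ge> 0" "vk / eta1 \<ge> 0"
      using True assms Hp by auto
    thus ?thesis unfolding U_coef_def a_coef_def H_def[symmetric] by simp
  next
    case False
    have n1: "vk / (eta1 * eta2 * P * H) < 0" "vk / (eta1 * eta2) < 0" "vk / eta1 < 0"
      using False assms Hp by (auto simp: divide_neg_pos mult_pos_pos)
    have "(1 + vk / (eta1 * eta2 * P * H)) * P * H = P * H + vk / (eta1 * eta2)"
      using assms Hp by (simp add: field_simps)
    thus ?thesis unfolding U_coef_def a_coef_def H_def[symmetric] using n1 by simp
  qed
qed


theorem lemma4:
  fixes K :: nat and eta1 eta2 P sb sD :: real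
    and h g :: "nat \<Rightarrow> complex" and v :: "nat \<Rightarrow> real"
    and xs :: "nat \<Rightarrow> nat \<Rightarrow> real"
  assumes "K \<ge> 1"
    and "0 < eta1" "eta1 \<le> 1" "0 < eta2" "eta2 \<le> 1"
    and "P > 0" "sb > 0" "sD > 0"
    and "\<forall>k<K. h k \<noteq> 0 \<and> g k \<noteq> 0"
    and "\<forall>k<K. v k \<ge> - eta1 * eta2 * P * (cmod (h k))^2"
    and "cyclic_ascent K eta1 eta2 P sb sD h g v xs"
  shows "(\<lambda>n. J_obj K eta1 eta2 P sb sD h g v (xs n))
            \<longlonglongrightarrow> opt_val K eta1 eta2 P sb sD h g v
       \<and> (\<forall>y r. strict_mono r \<and> (\<forall>k<K. (\<lambda>n. xs (r n) k) \<longlonglongrightarrow> y k) \<longrightarrow>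
            feasible K eta1 eta2 P sb h v y \<and>
            J_obj K eta1 eta2 P sb sD h g v y = opt_val K eta1 eta2 P sb sD h g v)"
proof -
  define c where "c k = eta1 * (cmod (g k))^2" for k
  define a where "a k = a_coef eta1 eta2 P sb (h k) (v k)" for k
  define U where "U k = U_coef eta1 eta2 P sb (h k) (v k)" for k
  interpret Q: P2 K c a U sb sD
  proof
    show "1 \<le> K" "0 < sb" "0 < sD" using assms by auto
    show "\<And>k. k < K \<Longrightarrow> 0 < c k" using assms(2,9) by (simp add: c_def)
    show "\<And>k. k < K \<Longrightarrow> U k \<le> a k" using U_le_a assms(2,4,6,9) by (simp add: U_def a_def)
  qed
  have Jeq: "J_obj K eta1 eta2 P sb sD h g v = Q.JJ"
    by (rule ext) (simp add: J_obj_def Q.JJ_def Q.SS_def Q.TT_def Q.fk_def Q.dk_def c_def a_def)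
  have Feq: "feasible K eta1 eta2 P sb h v = Q.FF"
    by (rule ext) (simp add: feasible_def Q.FF_def U_def)
  have cyc: "Q.FF (xs 0) \<and> (\<forall>n. (\<forall>k. k \<noteq> n mod K \<longrightarrow> xs (Suc n) k = xs n k) \<and>
        sb \<le> xs (Suc n) (n mod K) \<and> xs (Suc n) (n mod K) \<le> U (n mod K) \<and>
        (\<forall>t. sb \<le> t \<and> t \<le> U (n mod K) \<longrightarrow>
           Q.JJ ((xs n)(n mod K := t)) \<le> Q.JJ (xs (Suc n))))"
    using assms(11) unfolding cyclic_ascent_def Let_def Jeq Feq U_def by simp
  obtain L where L: "(\<lambda>n. Q.JJ (xs n)) \<longlonglongrightarrow> L" "Sup (Q.JJ ` {x. Q.FF x}) = L"
    "\<forall>y r. strict_mono r \<and> (\<forall>k<K. (\<lambda>n. xs (r n) k) \<longlonglongrightarrow> y k) \<longrightarrow> Q.FF y \<and> Q.JJ y = L"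
    using Q.main[of xs] cyc by blast
  have opt: "opt_val K eta1 eta2 P sb sD h g v = L"
    using L(2) by (simp add: opt_val_def Jeq Feq)
  show ?thesis unfolding opt Jeq Feq using L(1,3) by blast
qed



end
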